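(* Let $K$ be an algebraically closed field, $R=K[x_1,\dots,x_N]$, and let $G\subset R$ be a finite set of monomials. Suppose there are subsets $S_0,\dots,S_r$ of $G$ such that (i) $\bigcup_{i=0}^r S_i=G$; (ii) $S_0$ has exactly one element; (iii) the following recursive procedure can always be performed and always comes to an end, regardless of the choice of the indeterminate $z$ and of the index $j$ at each step: 0. Set $T=S_0$. 1. Pick an indeterminate $z$ dividing the only element of $T$. 2. Cancel (remove) all monomials divisible by $z$ from every $S_i$ (and from $G$). 3. If no element of $G$ is left, end. Otherwise pick an index $j$ such that exactly one element is left in $S_j$ (such an index must exist for the procedure to be performable), and set $T$ equal to the current $S_j$. 4. Go to 1. For $i=0,\dots,r$ set $q_i=\sum_{\mu\in S_i}\mu$. Then $$\sqrt{(G)}=\sqrt{(q_0,\dots,q_r)}.$$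
   Context: $(G)$ denotes the ideal of $R$ generated by $G$; $\sqrt{J}$ denotes the radical of an ideal $J$. Condition (iii) means: for every sequence of choices, whenever monomials of $G$ remain after step 2, some $S_j$ has exactly one remaining element, and after finitely many steps all monomials of $G$ have been cancelled. *)

theory Defs
  imports "HOL-Computational_Algebra.Polynomial" "HOL-Library.Poly_Mapping"
begin

definition alg_closed :: "'a::field itself \<Rightarrow> bool" where
  "alg_closed _ \<longleftrightarrow> (\<forall>p::'a poly. degree p > 0 \<longrightarrow> (\<exists>x. poly p x = 0))"

text \<open>Polynomial ring K[x_v : v in 'v]: exponent vectors ('v =>0 nat) to coefficients.
  A monomial is identified with its exponent vector m; as a polynomial it is Poly_Mapping.single m 1.\<close>
type_synonym ('v, 'a) mpoly = "('v \<Rightarrow>\<^sub>0 nat) \<Rightarrow>\<^sub>0 'a"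

definition monom_poly :: "('v \<Rightarrow>\<^sub>0 nat) \<Rightarrow> ('v, 'a::comm_ring_1) mpoly" where
  "monom_poly m = Poly_Mapping.single m 1"

definition ideal_gen :: "'r::comm_ring_1 set \<Rightarrow> 'r set" where
  "ideal_gen A = {p. \<exists>F c. finite F \<and> F \<subseteq> A \<and> p = (\<Sum>a\<in>F. c a * a)}"

definition radical :: "'r::comm_ring_1 set \<Rightarrow> 'r set" where
  "radical I = {f. \<exists>n. f ^ n \<in> I}"

text \<open>Monomials of X not yet cancelled after cancelling all indeterminates in Z.\<close>
definition alive :: "'v set \<Rightarrow> ('v \<Rightarrow>\<^sub>0 nat) set \<Rightarrow> ('v \<Rightarrow>\<^sub>0 nat) set" where
  "alive Z X = {m \<in> X. \<forall>z\<in>Z. Poly_Mapping.lookup m z = 0}"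

text \<open>proc_ok G S r Z t: starting at step 1 with T = {t}, after the indeterminates in Z
  have been cancelled, the procedure can always be performed and always ends,
  whatever choices of z (step 1) and j (step 3) are made. Inductive = finitely many steps.\<close>
inductive proc_ok :: "('v \<Rightarrow>\<^sub>0 nat) set \<Rightarrow> (nat \<Rightarrow> ('v \<Rightarrow>\<^sub>0 nat) set) \<Rightarrow> nat
    \<Rightarrow> 'v set \<Rightarrow> ('v \<Rightarrow>\<^sub>0 nat) \<Rightarrow> bool"
  for G S r where
  step: "\<lbrakk> \<exists>z. Poly_Mapping.lookup t z > 0;
          \<forall>z. Poly_Mapping.lookup t z > 0 \<longrightarrow>
             alive (insert z Z) G = {} \<or>
             ((\<exists>j\<le>r. card (alive (insert z Z) (S j)) = 1) \<and>
              (\<forall>j\<le>r. card (alive (insert z Z) (S j)) = 1 \<longrightarrow>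
                  proc_ok G S r (insert z Z) (the_elem (alive (insert z Z) (S j))))) \<rbrakk>
        \<Longrightarrow> proc_ok G S r Z t"

end

theory Submission
  imports Defs
begin

lemma ig_zero: "0 \<in> ideal_gen A"
  unfolding ideal_gen_def by (rule CollectI, rule exI[of _ "{}"]) simp

lemma ig_base: "a \<in> A \<Longrightarrow> a \<in> ideal_gen A"
  unfolding ideal_gen_def by (rule CollectI, rule exI[of _ "{a}"], rule exI[of _ "\<lambda>_. 1"]) simp

lemma ig_mult: "p \<in> ideal_gen A \<Longrightarrow> c * p \<in> ideal_gen A"
proof -
  assume "p \<in> ideal_gen A"
  then obtain F d where F: "finite F" "F \<subseteq> A" "p = (\<Sum>a\<in>F. d a * a)"
    unfolding ideal_gen_def by blast
  have "c * p = (\<Sum>a\<in>F. (c * d a) * a)"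
    using F(3) by (simp add: sum_distrib_left mult.assoc)
  then show ?thesis using F unfolding ideal_gen_def
    by (intro CollectI exI[of _ F] exI[of _ "\<lambda>a. c * d a"]) simp
qed

lemma ig_add: "p \<in> ideal_gen A \<Longrightarrow> q \<in> ideal_gen A \<Longrightarrow> p + q \<in> ideal_gen A"
proof -
  assume "p \<in> ideal_gen A" "q \<in> ideal_gen A"
  then obtain F1 d1 F2 d2 where F: "finite F1" "F1 \<subseteq> A" "p = (\<Sum>a\<in>F1. d1 a * a)"
    "finite F2" "F2 \<subseteq> A" "q = (\<Sum>a\<in>F2. d2 a * a)"
    unfolding ideal_gen_def by blast
  define e1 where "e1 a = (if a \<in> F1 then d1 a else 0)" for a
  define e2 where "e2 a = (if a \<in> F2 then d2 a else 0)" for a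
  have 1: "(\<Sum>a\<in>F1 \<union> F2. e1 a * a) = p"
    unfolding F(3) by (rule sum.mono_neutral_cong_right) (auto simp: e1_def F)
  have 2: "(\<Sum>a\<in>F1 \<union> F2. e2 a * a) = q"
    unfolding F(6) by (rule sum.mono_neutral_cong_right) (auto simp: e2_def F)
  have "p + q = (\<Sum>a\<in>F1 \<union> F2. (e1 a + e2 a) * a)"
    using 1 2 by (simp add: distrib_right sum.distrib)
  then show ?thesis using F unfolding ideal_gen_def
    by (intro CollectI exI[of _ "F1 \<union> F2"] exI[of _ "\<lambda>a. e1 a + e2 a"]) simp
qed

lemma ig_sum: "finite F \<Longrightarrow> (\<And>x. x \<in> F \<Longrightarrow> f x \<in> ideal_gen A) \<Longrightarrow> sum f F \<in> ideal_gen A"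
  by (induction F rule: finite_induct) (auto intro: ig_zero ig_add)

lemma ig_mono: "A \<subseteq> B \<Longrightarrow> ideal_gen A \<subseteq> ideal_gen B"
  unfolding ideal_gen_def by blast

lemma ig_insert:
  assumes "p \<in> ideal_gen (insert a A)"
  shows "\<exists>i c. i \<in> ideal_gen A \<and> p = i + c * a"
proof -
  obtain F d where F: "finite F" "F \<subseteq> insert a A" "p = (\<Sum>x\<in>F. d x * x)"
    using assms unfolding ideal_gen_def by blast
  have i: "(\<Sum>x\<in>F - {a}. d x * x) \<in> ideal_gen A"
    using F unfolding ideal_gen_def by (intro CollectI exI[of _ "F - {a}"] exI[of _ d]) auto
  show ?thesis
  proof (cases "a \<in> F")
    case True
    then have "p = (\<Sum>x\<in>F - {a}. d x * x) + d a * a"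
      using F by (simp add: sum.remove add.commute)
    then show ?thesis using i by (intro exI[of _ "\<Sum>x\<in>F - {a}. d x * x"] exI[of _ "d a"]) simp
  next
    case False
    then have "p = (\<Sum>x\<in>F - {a}. d x * x) + 0 * a" using F by simp
    then show ?thesis using i by (intro exI[of _ "\<Sum>x\<in>F - {a}. d x * x"] exI[of _ 0]) simp
  qed
qed

abbreviation Rad where "Rad A \<equiv> radical (ideal_gen A)"

lemma rad_I: "x \<in> ideal_gen A \<Longrightarrow> x \<in> Rad A"
  unfolding radical_def by (rule CollectI, rule exI[of _ 1]) simp

lemma rad_base: "a \<in> A \<Longrightarrow> a \<in> Rad A"
  by (intro rad_I ig_base)

lemma rad_mult: "y \<in> Rad A \<Longrightarrow> x * y \<in> Rad A"
proof -
  assume "y \<in> Rad A"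
  then obtain n where "y ^ n \<in> ideal_gen A" unfolding radical_def by blast
  then have "(x * y) ^ n \<in> ideal_gen A" by (simp add: power_mult_distrib ig_mult)
  then show ?thesis unfolding radical_def by blast
qed

lemma pow_ig: "x ^ n \<in> ideal_gen A \<Longrightarrow> n \<le> k \<Longrightarrow> x ^ k \<in> ideal_gen A"
proof -
  assume a: "x ^ n \<in> ideal_gen A" "n \<le> k"
  then have "x ^ k = x ^ (k - n) * x ^ n" by (simp add: power_add[symmetric])
  then show ?thesis using a ig_mult by metis
qed

lemma rad_add: "x \<in> Rad A \<Longrightarrow> y \<in> Rad A \<Longrightarrow> x + y \<in> Rad A"
proof -
  assume "x \<in> Rad A" "y \<in> Rad A"
  then obtain n m where nm: "x ^ n \<in> ideal_gen A" "y ^ m \<in> ideal_gen A"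
    unfolding radical_def by blast
  have "(x + y) ^ (n + m) = (\<Sum>k\<le>n + m. of_nat ((n + m) choose k) * x ^ k * y ^ (n + m - k))"
    by (rule binomial_ring)
  also have "\<dots> \<in> ideal_gen A"
  proof (rule ig_sum)
    fix k assume k: "k \<in> {..n + m}"
    show "of_nat ((n + m) choose k) * x ^ k * y ^ (n + m - k) \<in> ideal_gen A"
    proof (cases "n \<le> k")
      case True
      then have "x ^ k \<in> ideal_gen A" using pow_ig nm by blast
      then show ?thesis using ig_mult[of "x ^ k" A "of_nat ((n + m) choose k) * y ^ (n + m - k)"]
        by (simp add: ac_simps)
    next
      case False
      have "m \<le> n + m - k" using False k by simp
      then have "y ^ (n + m - k) \<in> ideal_gen A" using pow_ig nm(2) by blast
      then show ?thesis using ig_mult by blast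
    qed
  qed simp
  finally show ?thesis unfolding radical_def by blast
qed

lemma rad_sum: "finite F \<Longrightarrow> (\<And>x. x \<in> F \<Longrightarrow> f x \<in> Rad A) \<Longrightarrow> sum f F \<in> Rad A"
  by (induction F rule: finite_induct) (auto intro: rad_I ig_zero rad_add)

lemma rad_rad: "x ^ n \<in> Rad A \<Longrightarrow> x \<in> Rad A"
proof -
  assume "x ^ n \<in> Rad A"
  then obtain m where "(x ^ n) ^ m \<in> ideal_gen A" unfolding radical_def by blast
  then show ?thesis unfolding radical_def by (metis (mono_tags) CollectI power_mult)
qed

lemma rad_sub: "B \<subseteq> Rad A \<Longrightarrow> Rad B \<subseteq> Rad A"
proof
  fix f assume B: "B \<subseteq> Rad A" and f: "f \<in> Rad B"
  then obtain n where "f ^ n \<in> ideal_gen B" unfolding radical_def by blast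
  then obtain F d where F: "finite F" "F \<subseteq> B" "f ^ n = (\<Sum>x\<in>F. d x * x)"
    unfolding ideal_gen_def by blast
  have "f ^ n \<in> Rad A" unfolding F(3)
    using F B by (intro rad_sum rad_mult) auto
  then show "f \<in> Rad A" by (rule rad_rad)
qed

lemma rad_mono: "A \<subseteq> B \<Longrightarrow> Rad A \<subseteq> Rad B"
  unfolding radical_def using ig_mono by blast

lemma rad_split:
  assumes ab: "a * b \<in> Rad A" and fa: "f \<in> Rad (insert a A)" and fb: "f \<in> Rad (insert b A)"
  shows "f \<in> Rad A"
proof -
  obtain n m where "f ^ n \<in> ideal_gen (insert a A)" "f ^ m \<in> ideal_gen (insert b A)"
    using fa fb unfolding radical_def by blast
  then obtain i1 c1 i2 c2 where i: "i1 \<in> ideal_gen A" "f ^ n = i1 + c1 * a"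
    "i2 \<in> ideal_gen A" "f ^ m = i2 + c2 * b"
    using ig_insert by metis
  have "f ^ (n + m) = f ^ m * i1 + c1 * i2 * a + (c1 * c2) * (a * b)"
    unfolding power_add i by (simp add: algebra_simps)
  also have "\<dots> \<in> Rad A"
  proof -
    have "f ^ m * i1 \<in> Rad A" using i by (intro rad_I ig_mult)
    moreover have "c1 * i2 * a \<in> Rad A" using i ig_mult[of i2 A "c1 * a"]
      by (intro rad_I) (simp add: ac_simps)
    moreover have "(c1 * c2) * (a * b) \<in> Rad A" using ab by (rule rad_mult)
    ultimately show ?thesis by (meson rad_add)
  qed
  finally show ?thesis by (rule rad_rad)
qed

lemma rad_prod:
  "finite X \<Longrightarrow> prod g X \<in> Rad A \<Longrightarrow> (\<forall>x\<in>X. f \<in> Rad (insert (g x) A)) \<Longrightarrow> f \<in> Rad A"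
proof (induction X arbitrary: A rule: finite_induct)
  case empty
  then have "f * 1 \<in> Rad A" by (intro rad_mult) simp
  then show ?case by simp
next
  case (insert x X)
  have "prod g X \<in> Rad (insert (prod g X) A)" by (rule rad_base) simp
  moreover have "\<forall>y\<in>X. f \<in> Rad (insert (g y) (insert (prod g X) A))"
    using insert.prems(2) rad_mono[of "insert (g _) A" "insert (g _) (insert (prod g X) A)"] by blast
  ultimately have "f \<in> Rad (insert (prod g X) A)" using insert.IH by blast
  moreover have "g x * prod g X \<in> Rad A" using insert by simp
  ultimately show ?case using rad_split insert.prems(2) by blast
qed

lemma monom_add: "monom_poly (a + b) = (monom_poly a * monom_poly b :: ('v,'a::comm_ring_1) mpoly)"
  by (simp add: monom_poly_def mult_single)

lemma monom_zero: "monom_poly 0 = (1 :: ('v,'a::comm_ring_1) mpoly)"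
  by (simp add: monom_poly_def)

lemma monom_sum: "finite K \<Longrightarrow>
  monom_poly (\<Sum>z\<in>K. h z) = (\<Prod>z\<in>K. monom_poly (h z) :: ('v,'a::comm_ring_1) mpoly)"
  by (induction K rule: finite_induct) (simp_all add: monom_zero monom_add)

lemma pm_decomp: "(t::'v::finite \<Rightarrow>\<^sub>0 nat) = (\<Sum>z\<in>UNIV. Poly_Mapping.single z (Poly_Mapping.lookup t z))"
  by (rule poly_mapping_eqI) (simp add: lookup_sum lookup_single when_def)

lemma monom_div:
  assumes "Poly_Mapping.lookup \<mu> z \<noteq> 0"
  shows "(monom_poly \<mu> :: ('v,'a::comm_ring_1) mpoly)
     = monom_poly (Poly_Mapping.single z 1) * monom_poly (\<mu> - Poly_Mapping.single z 1)"
proof -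
  have "\<mu> = Poly_Mapping.single z 1 + (\<mu> - Poly_Mapping.single z 1)"
    using assms by (intro poly_mapping_eqI) (auto simp add: lookup_add lookup_minus lookup_single when_def)
  then show ?thesis by (metis monom_add)
qed

lemma monom_pow: "(monom_poly (Poly_Mapping.single z n) :: ('v,'a::comm_ring_1) mpoly)
    = monom_poly (Poly_Mapping.single z 1) ^ n"
proof (induction n)
  case 0 then show ?case by (simp add: monom_zero)
next
  case (Suc n)
  have "Poly_Mapping.single z (Suc n) = Poly_Mapping.single z 1 + Poly_Mapping.single z n"
    by (simp add: single_add[symmetric])
  then show ?case using Suc by (simp add: monom_add)
qed

definition Jg :: "nat \<Rightarrow> (nat \<Rightarrow> ('v \<Rightarrow>\<^sub>0 nat) set) \<Rightarrow> 'v set \<Rightarrow> ('v,'a::comm_ring_1) mpoly set" where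
  "Jg r S Z = (\<lambda>i. \<Sum>\<mu>\<in>S i. monom_poly \<mu>) ` {..r} \<union> (\<lambda>z. monom_poly (Poly_Mapping.single z 1)) ` Z"

lemma dead:
  assumes "\<mu> \<in> M" "\<mu> \<notin> alive Z M"
  shows "(monom_poly \<mu> :: ('v,'a::comm_ring_1) mpoly) \<in> ideal_gen (Jg r S Z)"
proof -
  obtain z where z: "z \<in> Z" "Poly_Mapping.lookup \<mu> z \<noteq> 0"
    using assms unfolding alive_def by auto
  have "monom_poly (Poly_Mapping.single z 1) \<in> ideal_gen (Jg r S Z :: ('v,'a) mpoly set)"
    using z by (intro ig_base) (auto simp: Jg_def)
  then have "monom_poly (\<mu> - Poly_Mapping.single z 1) * monom_poly (Poly_Mapping.single z 1)
      \<in> ideal_gen (Jg r S Z :: ('v,'a) mpoly set)" by (rule ig_mult)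
  then show ?thesis unfolding monom_div[OF z(2)] by (simp only: mult.commute)
qed

lemma main:
  assumes "proc_ok G S r Z t" "finite G" "\<forall>i\<le>r. S i \<subseteq> G"
  shows "(monom_poly t :: ('v::finite,'a::comm_ring_1) mpoly) \<in> Rad (Jg r S Z)
     \<Longrightarrow> monom_poly ` G \<subseteq> (Rad (Jg r S Z) :: ('v,'a) mpoly set)"
  using assms(1)
proof induction
  case (step t Z)
  show ?case
  proof (rule image_subsetI)
    fix \<mu> assume \<mu>: "\<mu> \<in> G"
    let ?g = "\<lambda>z. (monom_poly (Poly_Mapping.single z (Poly_Mapping.lookup t z)) :: ('v,'a) mpoly)"
    have "(monom_poly (\<Sum>z\<in>UNIV. Poly_Mapping.single z (Poly_Mapping.lookup t z)) :: ('v,'a) mpoly)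
       = prod ?g UNIV" by (rule monom_sum) simp
    then have "(monom_poly t :: ('v,'a) mpoly) = prod ?g UNIV"
      by (simp only: pm_decomp[of t, symmetric])
    then have prod: "prod ?g UNIV \<in> Rad (Jg r S Z)"
      using step.prems by simp
    show "(monom_poly \<mu> :: ('v,'a) mpoly) \<in> Rad (Jg r S Z)"
    proof (rule rad_prod[OF finite_UNIV prod], intro ballI)
      fix z :: 'v
      show "monom_poly \<mu> \<in> Rad (insert (?g z) (Jg r S Z))"
      proof (cases "Poly_Mapping.lookup t z > 0")
        case False
        then have "?g z = 1" by (simp add: monom_zero)
        then have "1 \<in> Rad (insert (?g z) (Jg r S Z))" by (metis insertI1 rad_base)
        then show ?thesis using rad_mult[of 1 _ "monom_poly \<mu>"] by simp
      next
        case True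
        let ?J = "Jg r S (insert z Z) :: ('v,'a) mpoly set"
        have key: "(monom_poly \<mu> :: ('v,'a) mpoly) \<in> Rad ?J"
          using step.IH[rule_format, OF True]
        proof (elim disjE conjE)
          assume "alive (insert z Z) G = {}"
          then show ?thesis using \<mu> dead[of \<mu> G "insert z Z" r S] by (intro rad_I) auto
        next
          assume ex: "\<exists>j\<le>r. card (alive (insert z Z) (S j)) = 1"
            and all: "\<forall>j\<le>r. card (alive (insert z Z) (S j)) = 1 \<longrightarrow>
               proc_ok G S r (insert z Z) (the_elem (alive (insert z Z) (S j))) \<and>
               ((monom_poly (the_elem (alive (insert z Z) (S j))) :: ('v,'a) mpoly) \<in> Rad ?J \<longrightarrow>
                 monom_poly ` G \<subseteq> Rad ?J)"
          obtain j where j: "j \<le> r" "card (alive (insert z Z) (S j)) = 1" using ex by blast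
          then obtain s where s: "alive (insert z Z) (S j) = {s}" by (metis card_1_singletonE)
          have IH: "(monom_poly s :: ('v,'a) mpoly) \<in> Rad ?J \<Longrightarrow> monom_poly ` G \<subseteq> Rad ?J"
            using all j s by simp
          have sS: "s \<in> S j" using s unfolding alive_def by auto
          have fin: "finite (S j)" using j assms(2,3) finite_subset by metis
          let ?q = "\<Sum>\<mu>\<in>S j. (monom_poly \<mu> :: ('v,'a) mpoly)"
          let ?rest = "\<Sum>\<mu>\<in>S j - {s}. (monom_poly \<mu> :: ('v,'a) mpoly)"
          have qeq: "?q = monom_poly s + ?rest" using sS fin by (simp add: sum.remove)
          have q: "?q \<in> Rad ?J" using j by (intro rad_base) (auto simp: Jg_def)
          have rest: "?rest \<in> Rad ?J"
          proof (rule rad_sum)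
            fix x assume "x \<in> S j - {s}"
            then show "(monom_poly x :: ('v,'a) mpoly) \<in> Rad ?J"
              using s by (intro rad_I dead[of x "S j"]) auto
          qed (use fin in simp)
          have "monom_poly s = ?q + (-1) * ?rest" using qeq by simp
          also have "\<dots> \<in> Rad ?J" using q rest by (intro rad_add rad_mult)
          finally show ?thesis using IH \<mu> by blast
        qed
        have "?J \<subseteq> Rad (insert (?g z) (Jg r S Z))"
        proof
          fix p assume "p \<in> ?J"
          then consider "p \<in> Jg r S Z" | "p = monom_poly (Poly_Mapping.single z 1)"
            unfolding Jg_def by auto
          then show "p \<in> Rad (insert (?g z) (Jg r S Z))"
          proof cases
            case 1 then show ?thesis by (intro rad_base) simp
          next
            case 2
            have "p ^ Poly_Mapping.lookup t z \<in> Rad (insert (?g z) (Jg r S Z))"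
              unfolding 2 monom_pow[symmetric] by (intro rad_base) simp
            then show ?thesis by (rule rad_rad)
          qed
        qed
        then show ?thesis using key rad_sub by blast
      qed
    qed
  qed
qed

theorem proposition2:
  fixes G :: "('v::finite \<Rightarrow>\<^sub>0 nat) set"
    and S :: "nat \<Rightarrow> ('v \<Rightarrow>\<^sub>0 nat) set"
    and r :: nat
  assumes K: "alg_closed TYPE('a::field)"
    and finG: "finite G"
    and sub: "\<forall>i\<le>r. S i \<subseteq> G"
    and cover: "(\<Union>i\<le>r. S i) = G"
    and S0: "card (S 0) = 1"
    and proc: "proc_ok G S r {} (the_elem (S 0))"
  shows "radical (ideal_gen (monom_poly ` G :: ('v, 'a) mpoly set))
       = radical (ideal_gen ((\<lambda>i. \<Sum>\<mu>\<in>S i. (monom_poly \<mu> :: ('v, 'a) mpoly)) ` {..r}))"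
proof
  have J0: "(Jg r S {} :: ('v,'a) mpoly set) = (\<lambda>i. \<Sum>\<mu>\<in>S i. (monom_poly \<mu> :: ('v, 'a) mpoly)) ` {..r}"
    by (simp add: Jg_def)
  obtain t where t: "S 0 = {t}" using S0 by (metis card_1_singletonE)
  have "(monom_poly t :: ('v,'a) mpoly) \<in> Rad (Jg r S {})"
    unfolding J0 using t by (intro rad_base) (auto intro!: image_eqI[of _ _ 0])
  then have "monom_poly ` G \<subseteq> (Rad (Jg r S {}) :: ('v,'a) mpoly set)"
    using main[OF _ finG sub] proc t by simp
  then show "radical (ideal_gen (monom_poly ` G :: ('v, 'a) mpoly set))
       \<subseteq> radical (ideal_gen ((\<lambda>i. \<Sum>\<mu>\<in>S i. (monom_poly \<mu> :: ('v, 'a) mpoly)) ` {..r}))"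
    unfolding J0 by (rule rad_sub)
next
  have "(\<lambda>i. \<Sum>\<mu>\<in>S i. (monom_poly \<mu> :: ('v, 'a) mpoly)) ` {..r}
      \<subseteq> radical (ideal_gen (monom_poly ` G :: ('v, 'a) mpoly set))"
  proof (rule image_subsetI)
    fix i assume i: "i \<in> {..r}"
    then have SG: "S i \<subseteq> G" using sub by auto
    then have "finite (S i)" using finG by (rule finite_subset)
    then show "(\<Sum>\<mu>\<in>S i. (monom_poly \<mu> :: ('v, 'a) mpoly)) \<in> radical (ideal_gen (monom_poly ` G))"
    proof (rule rad_sum)
      fix x assume "x \<in> S i"
      then show "(monom_poly x :: ('v, 'a) mpoly) \<in> radical (ideal_gen (monom_poly ` G))"
        using SG by (intro rad_base) auto
    qed
  qed
  then show "radical (ideal_gen ((\<lambda>i. \<Sum>\<mu>\<in>S i. (monom_poly \<mu> :: ('v, 'a) mpoly)) ` {..r}))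
      \<subseteq> radical (ideal_gen (monom_poly ` G :: ('v, 'a) mpoly set))"
    by (rule rad_sub)
qed

end
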